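(* Let $n\ge1$, let $x_1,\dots,x_n$ be nonzero real numbers and $a_1,\dots,a_n>0$. Put $P=\sum_{j=1}^n \frac{x_j^2}{a_j}$, $Q=\sum_{j=1}^n a_j$, $$A=\frac{1}{8}\sqrt{PQ}\cdot \sum_{i=1}^n \left(\frac{x_i^2}{a_iP}-\frac{a_i}{Q}\right)^2,$$ $$m=\min_{1\le i\le n}\min\left\{\frac{x_i^2}{a_iP},\frac{a_i}{Q}\right\},\qquad M=\max_{1\le i\le n}\max\left\{\frac{x_i^2}{a_iP},\frac{a_i}{Q}\right\}.$$ Then $$\frac{1}{Q}\left(\frac{A^2}{M^2}+\frac{2A}{M}\sum_{i=1}^n |x_i|\right)\leq \sum_{i=1}^n\frac{x_i^2}{a_i}-\frac{(|x_1|+\dots+|x_n|)^2}{a_1+\dots+a_n}\leq \frac{1}{Q}\left(\frac{A^2}{m^2}+\frac{2A}{m}\sum_{i=1}^n |x_i|\right).$$ *)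

theory Defs
  imports Complex_Main
begin

end

theory Submission
  imports Defs
begin

lemma term_bounds:
  fixes p q m M :: real
  assumes "p > 0" "q > 0" "m > 0" "m \<le> min p q" "max p q \<le> M"
  shows "(p - q)\<^sup>2 / (8*M) \<le> (sqrt p - sqrt q)\<^sup>2 / 2"
    and "(sqrt p - sqrt q)\<^sup>2 / 2 \<le> (p - q)\<^sup>2 / (8*m)"
proof -
  have Mp: "M > 0" using assms by auto
  have e: "(p - q)\<^sup>2 = (sqrt p - sqrt q)\<^sup>2 * (sqrt p + sqrt q)\<^sup>2"
  proof -
    have "p - q = (sqrt p - sqrt q) * (sqrt p + sqrt q)"
      using assms by (simp add: algebra_simps)
    thus ?thesis by (simp add: power_mult_distrib[symmetric])
  qed
  have sp: "sqrt p \<le> sqrt M" "sqrt q \<le> sqrt M" using assms by auto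
  have "(sqrt p + sqrt q)\<^sup>2 \<le> (2 * sqrt M)\<^sup>2"
  proof (rule power_mono)
    show "sqrt p + sqrt q \<le> 2 * sqrt M" using sp by linarith
    show "0 \<le> sqrt p + sqrt q" using assms by simp
  qed
  hence u: "(sqrt p + sqrt q)\<^sup>2 \<le> 4 * M" using Mp by (simp add: power_mult_distrib)
  have sm: "sqrt m \<le> sqrt p" "sqrt m \<le> sqrt q" using assms by auto
  have "(2 * sqrt m)\<^sup>2 \<le> (sqrt p + sqrt q)\<^sup>2"
  proof (rule power_mono)
    show "2 * sqrt m \<le> sqrt p + sqrt q" using sm by linarith
    show "0 \<le> 2 * sqrt m" using assms by simp
  qed
  hence l: "4 * m \<le> (sqrt p + sqrt q)\<^sup>2" using assms by (simp add: power_mult_distrib)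
  have z: "0 \<le> (sqrt p - sqrt q)\<^sup>2" by simp
  show "(p - q)\<^sup>2 / (8*M) \<le> (sqrt p - sqrt q)\<^sup>2 / 2"
  proof -
    have "(sqrt p - sqrt q)\<^sup>2 * (sqrt p + sqrt q)\<^sup>2 \<le> (sqrt p - sqrt q)\<^sup>2 * (4 * M)"
      using u z by (rule mult_left_mono)
    thus ?thesis unfolding e using Mp by (simp add: divide_simps)
  qed
  show "(sqrt p - sqrt q)\<^sup>2 / 2 \<le> (p - q)\<^sup>2 / (8*m)"
  proof -
    have "(sqrt p - sqrt q)\<^sup>2 * (4 * m) \<le> (sqrt p - sqrt q)\<^sup>2 * (sqrt p + sqrt q)\<^sup>2"
      using l z by (rule mult_left_mono)
    thus ?thesis unfolding e using assms by (simp add: divide_simps mult.commute mult.left_commute)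
  qed
qed

theorem mainTheorem5:
  fixes n :: nat and x a :: "nat \<Rightarrow> real" and P Q A m M :: real
  assumes "n \<ge> 1"
    and "\<And>j. j \<in> {1..n} \<Longrightarrow> x j \<noteq> 0"
    and "\<And>j. j \<in> {1..n} \<Longrightarrow> a j > 0"
    and "P = (\<Sum>j=1..n. (x j)\<^sup>2 / a j)"
    and "Q = (\<Sum>j=1..n. a j)"
    and "A = 1/8 * sqrt (P * Q) * (\<Sum>i=1..n. ((x i)\<^sup>2 / (a i * P) - a i / Q)\<^sup>2)"
    and "m = Min ((\<lambda>i. min ((x i)\<^sup>2 / (a i * P)) (a i / Q)) ` {1..n})"
    and "M = Max ((\<lambda>i. max ((x i)\<^sup>2 / (a i * P)) (a i / Q)) ` {1..n})"
  shows "1 / Q * (A\<^sup>2 / M\<^sup>2 + 2 * A / M * (\<Sum>i=1..n. \<bar>x i\<bar>))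
           \<le> (\<Sum>i=1..n. (x i)\<^sup>2 / a i) - (\<Sum>i=1..n. \<bar>x i\<bar>)\<^sup>2 / (\<Sum>i=1..n. a i)
         \<and> (\<Sum>i=1..n. (x i)\<^sup>2 / a i) - (\<Sum>i=1..n. \<bar>x i\<bar>)\<^sup>2 / (\<Sum>i=1..n. a i)
           \<le> 1 / Q * (A\<^sup>2 / m\<^sup>2 + 2 * A / m * (\<Sum>i=1..n. \<bar>x i\<bar>))"
proof -
  define p where "p i = (x i)\<^sup>2 / (a i * P)" for i
  define q where "q i = a i / Q" for i
  define S where "S = (\<Sum>i=1..n. \<bar>x i\<bar>)"
  define R where "R = sqrt (P * Q)"
  let ?I = "{1..n}"
  have ne: "?I \<noteq> {}" using assms(1) by auto
  have fin: "finite ?I" by simp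
  have Ppos: "P > 0" unfolding assms(4)
    by (rule sum_pos) (use assms(1-3) in auto)
  have Qpos: "Q > 0" unfolding assms(5)
    by (rule sum_pos) (use assms(1-3) in auto)
  have Rpos: "R > 0" using Ppos Qpos by (simp add: R_def)
  have RR: "R * R = P * Q" using Ppos Qpos by (simp add: R_def)
  have pp: "p i > 0" if "i \<in> ?I" for i using assms(2,3)[OF that] Ppos by (simp add: p_def)
  have qp: "q i > 0" if "i \<in> ?I" for i using assms(3)[OF that] Qpos by (simp add: q_def)
  have sp: "(\<Sum>i\<in>?I. p i) = 1"
  proof -
    have "(\<Sum>i\<in>?I. p i) = (\<Sum>i\<in>?I. (x i)\<^sup>2 / a i) / P"
      by (simp add: p_def sum_divide_distrib)
    thus ?thesis using Ppos assms(4) by simp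
  qed
  have sq: "(\<Sum>i\<in>?I. q i) = 1"
    using Qpos assms(5) by (simp add: q_def sum_divide_distrib[symmetric])
  have pq: "sqrt (p i) * sqrt (q i) = \<bar>x i\<bar> / R" if "i \<in> ?I" for i
  proof -
    have "p i * q i = (x i)\<^sup>2 / (P * Q)"
      using assms(3)[OF that] by (simp add: p_def q_def)
    hence "sqrt (p i) * sqrt (q i) = sqrt ((x i)\<^sup>2) / sqrt (P*Q)"
      by (simp add: real_sqrt_mult[symmetric] real_sqrt_divide)
    thus ?thesis by (simp add: R_def)
  qed
  have H: "(\<Sum>i\<in>?I. (sqrt (p i) - sqrt (q i))\<^sup>2) = 2 - 2 * S / R"
  proof -
    have "(\<Sum>i\<in>?I. (sqrt (p i) - sqrt (q i))\<^sup>2)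
        = (\<Sum>i\<in>?I. p i + q i - 2 * (\<bar>x i\<bar> / R))"
    proof (rule sum.cong)
      fix i assume i: "i \<in> ?I"
      show "(sqrt (p i) - sqrt (q i))\<^sup>2 = p i + q i - 2 * (\<bar>x i\<bar> / R)"
        using pp[OF i] qp[OF i] pq[OF i]
        by (simp add: power2_diff)
    qed simp
    also have "\<dots> = (\<Sum>i\<in>?I. p i) + (\<Sum>i\<in>?I. q i) - 2 * S / R"
      by (simp only: sum.distrib sum_subtractf S_def sum_divide_distrib[symmetric]
          sum_distrib_left[symmetric])
    also have "\<dots> = 2 - 2 * S / R" using sp sq by simp
    finally show ?thesis .
  qed
  have RS: "R - S = R / 2 * (\<Sum>i\<in>?I. (sqrt (p i) - sqrt (q i))\<^sup>2)"
    unfolding H using Rpos by (simp add: field_simps)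
  have Aeq: "A = R / 8 * (\<Sum>i\<in>?I. (p i - q i)\<^sup>2)"
    using assms(6) by (simp add: p_def q_def R_def)
  have fimg: "finite ((\<lambda>i. min (p i) (q i)) ` ?I)" by simp
  have mle: "m \<le> min (p i) (q i)" if "i \<in> ?I" for i
  proof -
    have "m = Min ((\<lambda>i. min (p i) (q i)) ` ?I)"
      unfolding assms(7) p_def q_def ..
    also have "\<dots> \<le> min (p i) (q i)" by (rule Min_le) (use that in auto)
    finally show ?thesis .
  qed
  have mpos: "m > 0"
  proof -
    have mm: "m = Min ((\<lambda>i. min (p i) (q i)) ` ?I)"
      unfolding assms(7) p_def q_def ..
    have "m \<in> (\<lambda>i. min (p i) (q i)) ` ?I"
      unfolding mm by (rule Min_in[OF fimg]) (use ne in blast)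
    then obtain i where "i \<in> ?I" "m = min (p i) (q i)" by auto
    thus ?thesis using pp qp by auto
  qed
  have Mge: "max (p i) (q i) \<le> M" if "i \<in> ?I" for i
  proof -
    have "M = Max ((\<lambda>i. max (p i) (q i)) ` ?I)"
      unfolding assms(8) p_def q_def ..
    moreover have "max (p i) (q i) \<le> Max ((\<lambda>i. max (p i) (q i)) ` ?I)"
      by (rule Max_ge) (use that in auto)
    ultimately show ?thesis by simp
  qed
  have Mpos: "M > 0" using Mge[of 1] pp[of 1] assms(1) by force
  have low: "A / M \<le> R - S"
  proof -
    have "A / M = R * (\<Sum>i\<in>?I. (p i - q i)\<^sup>2 / (8*M))"
      by (simp add: Aeq sum_divide_distrib[symmetric])
    also have "\<dots> \<le> R * (\<Sum>i\<in>?I. (sqrt (p i) - sqrt (q i))\<^sup>2 / 2)"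
      using Rpos term_bounds(1)[OF pp qp mpos mle Mge]
      by (intro mult_left_mono sum_mono) auto
    also have "\<dots> = R - S" by (simp add: RS sum_divide_distrib[symmetric])
    finally show ?thesis .
  qed
  have up: "R - S \<le> A / m"
  proof -
    have "R - S = R * (\<Sum>i\<in>?I. (sqrt (p i) - sqrt (q i))\<^sup>2 / 2)"
      by (simp add: RS sum_divide_distrib[symmetric])
    also have "\<dots> \<le> R * (\<Sum>i\<in>?I. (p i - q i)\<^sup>2 / (8*m))"
      using Rpos term_bounds(2)[OF pp qp mpos mle Mge]
      by (intro mult_left_mono sum_mono) auto
    also have "\<dots> = A / m"
      by (simp add: Aeq sum_divide_distrib[symmetric])
    finally show ?thesis .
  qed
  have A0: "A \<ge> 0"
  proof -
    have "0 \<le> (\<Sum>i\<in>?I. (p i - q i)\<^sup>2)" by (rule sum_nonneg) simp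
    thus ?thesis unfolding Aeq using Rpos by simp
  qed
  have S0: "S \<ge> 0" by (simp add: S_def sum_nonneg)
  have RS0: "R - S \<ge> 0"
  proof -
    have "0 \<le> (\<Sum>i\<in>?I. (sqrt (p i) - sqrt (q i))\<^sup>2)" by (rule sum_nonneg) simp
    thus ?thesis unfolding RS using Rpos by simp
  qed
  have D: "(\<Sum>i=1..n. (x i)\<^sup>2 / a i) - (\<Sum>i=1..n. \<bar>x i\<bar>)\<^sup>2 / (\<Sum>i=1..n. a i)
      = 1 / Q * ((R - S) * (R + S))"
  proof -
    have "(\<Sum>i=1..n. (x i)\<^sup>2 / a i) - (\<Sum>i=1..n. \<bar>x i\<bar>)\<^sup>2 / (\<Sum>i=1..n. a i)
        = P - S\<^sup>2 / Q" unfolding assms(4) assms(5) S_def ..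
    also have "\<dots> = 1 / Q * ((R - S) * (R + S))"
      using Qpos RR by (simp add: field_simps power2_eq_square)
    finally show ?thesis .
  qed
  define t where "t = A / M"
  define u where "u = A / m"
  have t0: "t \<ge> 0" using A0 Mpos by (simp add: t_def)
  have e1: "A\<^sup>2 / M\<^sup>2 + 2 * A / M * S = t * (t + 2 * S)"
    using Mpos by (simp add: t_def power2_eq_square field_simps)
  have e2: "A\<^sup>2 / m\<^sup>2 + 2 * A / m * S = u * (u + 2 * S)"
    using mpos by (simp add: u_def power2_eq_square field_simps)
  have i1: "t * (t + 2 * S) \<le> (R - S) * (R + S)"
    using low t0 S0 by (intro mult_mono) (auto simp: t_def)
  have i2: "(R - S) * (R + S) \<le> u * (u + 2 * S)"
    using up RS0 S0 by (intro mult_mono) (auto simp: u_def)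
  have L1: "1 / Q * (A\<^sup>2 / M\<^sup>2 + 2 * A / M * (\<Sum>i=1..n. \<bar>x i\<bar>)) \<le> 1 / Q * ((R - S) * (R + S))"
    unfolding S_def[symmetric] e1 using i1 Qpos by (intro mult_left_mono) auto
  have L2: "1 / Q * ((R - S) * (R + S)) \<le> 1 / Q * (A\<^sup>2 / m\<^sup>2 + 2 * A / m * (\<Sum>i=1..n. \<bar>x i\<bar>))"
    unfolding S_def[symmetric] e2 using i2 Qpos by (intro mult_left_mono) auto
  show ?thesis unfolding D using L1 L2 by (rule conjI)
qed

end
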